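(* A function $\phi:\mathbb{F}_2^n\to\mathbb{C}$ satisfies $\|\phi\|_2=\|\phi\|_{U^3}=1$ (i.e. $\phi$ is a stabilizer state) if and only if there exists a Lagrangian subspace $L\le\mathbb{F}_2^{2n}$ such that for all $a,b\in\mathbb{F}_2^n$, $$\big|\widehat{\Delta_a\phi}(b)\big|=\begin{cases}1 & \text{if }(a,b)\in L,\\ 0&\text{if }(a,b)\notin L.\end{cases}$$
   Context: For $g:\mathbb{F}_2^n\to\mathbb{C}$: $\|g\|_2=(\mathbb{E}_{x\in\mathbb{F}_2^n}|g(x)|^2)^{1/2}$; $\Delta_a g(x)=g(x+a)\overline{g(x)}$; $\hat g(b)=\mathbb{E}_{x\in\mathbb{F}_2^n}g(x)(-1)^{b\cdot x}$; $\|g\|_{U^3}=\big(\mathbb{E}_{x,a,b,c}\Delta_a\Delta_b\Delta_c g(x)\big)^{1/8}$. The standard symplectic form on $\mathbb{F}_2^{2n}=\mathbb{F}_2^n\times\mathbb{F}_2^n$ is $[(a,b),(c,d)]=a\cdot d-b\cdot c$. A subspace $U$ is isotropic if $[u,v]=0$ for all $u,v\in U$; a Lagrangian subspace is a maximal isotropic subspace (equivalently an isotropic subspace of dimension $n$). *)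

theory Defs
  imports Complex_Main
begin

text \<open>The vector space F_2^n is modelled as the type of functions 'n \<Rightarrow> bool
  for a finite index type 'n (so n = CARD('n)); addition is pointwise xor.\<close>

type_synonym 'n vec2 = "'n \<Rightarrow> bool"

definition vadd :: "'n vec2 \<Rightarrow> 'n vec2 \<Rightarrow> 'n vec2" where
  "vadd x y = (\<lambda>i. x i \<noteq> y i)"

definition vzero :: "'n vec2" where
  "vzero = (\<lambda>i. False)"

text \<open>Dot product a \<cdot> x in F_2 (True = 1).\<close>
definition dot2 :: "('n::finite) vec2 \<Rightarrow> 'n vec2 \<Rightarrow> bool" where
  "dot2 a x = odd (card {i. a i \<and> x i})"

definition chr :: "('n::finite) vec2 \<Rightarrow> 'n vec2 \<Rightarrow> complex" where
  "chr b x = (if dot2 b x then -1 else 1)"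

definition expect :: "(('n::finite) vec2 \<Rightarrow> 'a::real_normed_field) \<Rightarrow> 'a" where
  "expect f = (\<Sum>x\<in>UNIV. f x) / of_nat (card (UNIV :: 'n vec2 set))"

definition norm2 :: "(('n::finite) vec2 \<Rightarrow> complex) \<Rightarrow> real" where
  "norm2 g = sqrt (expect (\<lambda>x. (cmod (g x))\<^sup>2))"

definition Delta :: "('n::finite) vec2 \<Rightarrow> ('n vec2 \<Rightarrow> complex) \<Rightarrow> 'n vec2 \<Rightarrow> complex" where
  "Delta a g x = g (vadd x a) * cnj (g x)"

definition fourier :: "(('n::finite) vec2 \<Rightarrow> complex) \<Rightarrow> 'n vec2 \<Rightarrow> complex" where
  "fourier g b = expect (\<lambda>x. g x * chr b x)"

text \<open>The U^3 norm. The average below is always a nonnegative real number;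
  we take its real part and the 8th root.\<close>
definition U3norm :: "(('n::finite) vec2 \<Rightarrow> complex) \<Rightarrow> real" where
  "U3norm g = (Re (expect (\<lambda>x. expect (\<lambda>a. expect (\<lambda>b. expect (\<lambda>c.
       Delta a (Delta b (Delta c g)) x)))))) powr (1/8)"

text \<open>Standard symplectic form on F_2^{2n} = F_2^n \<times> F_2^n:
  [(a,b),(c,d)] = a\<cdot>d - b\<cdot>c (in F_2, subtraction is xor).\<close>
definition sympl :: "('n::finite) vec2 \<times> 'n vec2 \<Rightarrow> 'n vec2 \<times> 'n vec2 \<Rightarrow> bool" where
  "sympl u v = (dot2 (fst u) (snd v) \<noteq> dot2 (snd u) (fst v))"

definition subspace2 :: "(('n::finite) vec2 \<times> 'n vec2) set \<Rightarrow> bool" where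
  "subspace2 U = ((vzero, vzero) \<in> U \<and>
     (\<forall>u\<in>U. \<forall>v\<in>U. (vadd (fst u) (fst v), vadd (snd u) (snd v)) \<in> U))"

definition isotropic :: "(('n::finite) vec2 \<times> 'n vec2) set \<Rightarrow> bool" where
  "isotropic U = (subspace2 U \<and> (\<forall>u\<in>U. \<forall>v\<in>U. \<not> sympl u v))"

definition lagrangian :: "(('n::finite) vec2 \<times> 'n vec2) set \<Rightarrow> bool" where
  "lagrangian L = (isotropic L \<and> (\<forall>M. isotropic M \<and> L \<subseteq> M \<longrightarrow> M = L))"

end

theory Submission
  imports Defs
begin

lemma vadd_comm: "vadd x y = vadd y x" by (auto simp: vadd_def fun_eq_iff)
lemma vadd_assoc: "vadd (vadd x y) z = vadd x (vadd y z)" by (auto simp: vadd_def fun_eq_iff)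
lemma vadd_lcomm: "vadd x (vadd y z) = vadd y (vadd x z)" by (auto simp: vadd_def fun_eq_iff)
lemma vadd_self[simp]: "vadd x x = vzero" by (auto simp: vadd_def vzero_def fun_eq_iff)
lemma vadd_self2[simp]: "vadd x (vadd x y) = y" by (auto simp: vadd_def fun_eq_iff)
lemma vadd_zero[simp]: "vadd x vzero = x" "vadd vzero x = x" by (auto simp: vadd_def vzero_def fun_eq_iff)
lemmas vadd_ac = vadd_comm vadd_assoc vadd_lcomm
lemma vadd_eq_zero: "vadd x y = vzero \<longleftrightarrow> x = y" by (auto simp: vadd_def vzero_def fun_eq_iff)

lemma sum_shift:
  fixes f :: "('n::finite) vec2 \<Rightarrow> 'a::comm_monoid_add"
  shows "(\<Sum>x\<in>UNIV. f (vadd x a)) = (\<Sum>x\<in>UNIV. f x)"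
  by (rule sum.reindex_bij_witness[where i="\<lambda>x. vadd x a" and j="\<lambda>x. vadd x a"])
     (auto simp: vadd_ac)

lemma dot2_comm: "dot2 a x = dot2 x a" unfolding dot2_def by (simp add: conj_commute)

lemma dot2_add: "dot2 b (vadd x y) = (dot2 b x \<noteq> dot2 b y)"
proof -
  define A where "A = {i. b i \<and> x i}"
  define B where "B = {i. b i \<and> y i}"
  have e: "{i. b i \<and> vadd x y i} = (A - B) \<union> (B - A)"
    by (auto simp: A_def B_def vadd_def)
  have c: "card {i. b i \<and> vadd x y i} = card (A - B) + card (B - A)"
    unfolding e by (rule card_Un_disjoint) auto
  have cA: "card A = card (A - B) + card (A \<inter> B)"
    by (metis Diff_Diff_Int Diff_subset card_Diff_subset Int_lower1 card_mono finite
        add.commute le_add_diff_inverse2 Int_commute)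
  have cB: "card B = card (B - A) + card (A \<inter> B)"
    by (metis Diff_Diff_Int Diff_subset card_Diff_subset Int_lower1 card_mono finite
        add.commute le_add_diff_inverse2 Int_commute)
  show ?thesis unfolding dot2_def c A_def[symmetric] B_def[symmetric] using cA cB by presburger
qed

lemma dot2_zero[simp]: "dot2 vzero x = False" "dot2 x vzero = False"
  by (auto simp: dot2_def vzero_def)

lemma chr_add: "chr b (vadd x y) = chr b x * chr b y"
  by (simp add: chr_def dot2_add)
lemma chr_comm: "chr b x = chr x b" by (simp add: chr_def dot2_comm)
lemma chr_zero[simp]: "chr vzero x = 1" "chr x vzero = 1" by (auto simp: chr_def)
lemma cnj_chr[simp]: "cnj (chr b x) = chr b x" by (simp add: chr_def)
lemma chr_sq[simp]: "chr b x * chr b x = 1" by (simp add: chr_def)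

lemma sum_chr: "(\<Sum>b\<in>UNIV. chr b (x::('n::finite) vec2)) =
   (if x = vzero then of_nat (card (UNIV :: 'n vec2 set)) else 0)"
proof (cases "x = vzero")
  case True then show ?thesis by simp
next
  case False
  then obtain i where xi: "x i" by (auto simp: vzero_def fun_eq_iff)
  define e :: "'n vec2" where "e = (\<lambda>j. j = i)"
  have "{j. e j \<and> x j} = {i}" using xi by (auto simp: e_def)
  then have ce: "chr e x = -1" by (simp add: chr_def dot2_def)
  have "(\<Sum>b\<in>UNIV. chr b x) = (\<Sum>b\<in>UNIV. chr (vadd b e) x)"
    by (rule sum_shift[symmetric])
  also have "\<dots> = (\<Sum>b\<in>UNIV. chr b x * chr e x)"
    by (simp add: chr_comm[of _ x] chr_add)
  also have "\<dots> = - (\<Sum>b\<in>UNIV. chr b x)" by (simp add: ce sum_negf)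
  finally show ?thesis using False by simp
qed

lemma Ncard_nz: "(of_nat (card (UNIV :: ('n::finite) vec2 set)) :: complex) \<noteq> 0" by simp

lemma fourier_Delta:
  fixes \<phi> :: "('n::finite) vec2 \<Rightarrow> complex"
  shows "fourier (Delta a \<phi>) b =
   (\<Sum>x\<in>UNIV. \<phi> (vadd x a) * cnj (\<phi> x) * chr b x) / of_nat (card (UNIV :: ('n::finite) vec2 set))"
  by (simp add: fourier_def expect_def Delta_def)

lemma sum_chr_delta:
  fixes f :: "('n::finite) vec2 \<Rightarrow> complex"
  shows "(\<Sum>y\<in>UNIV. f y * (\<Sum>b\<in>UNIV. chr b (vadd y t))) = of_nat (card (UNIV :: 'n vec2 set)) * f t"
proof -
  have "(\<Sum>y\<in>UNIV. f y * (\<Sum>b\<in>UNIV. chr b (vadd y t))) =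
        (\<Sum>y\<in>UNIV. if y = t then of_nat (card (UNIV :: 'n vec2 set)) * f y else 0)"
    by (rule sum.cong) (auto simp: sum_chr vadd_eq_zero)
  also have "\<dots> = of_nat (card (UNIV :: 'n vec2 set)) * f t" by simp
  finally show ?thesis .
qed

lemma lemB:
  fixes \<phi> :: "('n::finite) vec2 \<Rightarrow> complex"
  shows "(\<Sum>b\<in>UNIV. fourier (Delta a \<phi>) b * cnj (fourier (Delta a \<phi>) b) * chr c b) =
    (\<Sum>x\<in>UNIV. \<phi> (vadd x a) * cnj (\<phi> x) * (cnj (\<phi> (vadd (vadd x c) a)) * \<phi> (vadd x c)))
      / of_nat (card (UNIV :: 'n vec2 set))"
proof -
  define N :: complex where "N = of_nat (card (UNIV :: 'n vec2 set))"
  have N0: "N \<noteq> 0" by (simp add: N_def)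
  define T where "T x = \<phi> (vadd x a) * cnj (\<phi> x)" for x
  have F: "fourier (Delta a \<phi>) b = (\<Sum>x\<in>UNIV. T x * chr b x) / N" for b
    by (simp add: fourier_Delta T_def N_def)
  have cN: "cnj N = N" by (simp add: N_def)
  have FF: "fourier (Delta a \<phi>) b * cnj (fourier (Delta a \<phi>) b) =
     (\<Sum>x\<in>UNIV. \<Sum>y\<in>UNIV. T x * cnj (T y) * (chr b x * chr b y)) / (N * N)" for b
    unfolding F by (simp add: cN cnj_sum sum_product field_simps)
  have FF2: "fourier (Delta a \<phi>) b * cnj (fourier (Delta a \<phi>) b) * chr c b =
     (\<Sum>x\<in>UNIV. \<Sum>y\<in>UNIV. T x * cnj (T y) * chr b (vadd (vadd x y) c)) / (N * N)" for b
    unfolding FF by (simp add: sum_distrib_left sum_distrib_right chr_add chr_comm[of c] mult_ac)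
  have "(\<Sum>b\<in>UNIV. fourier (Delta a \<phi>) b * cnj (fourier (Delta a \<phi>) b) * chr c b)
     = (\<Sum>b\<in>UNIV. (\<Sum>x\<in>UNIV. \<Sum>y\<in>UNIV. T x * cnj (T y) * chr b (vadd (vadd x y) c))) / (N * N)"
    unfolding FF2 sum_divide_distrib ..
  also have "\<dots> = (\<Sum>x\<in>UNIV. T x * (\<Sum>y\<in>UNIV. cnj (T y) * (\<Sum>b\<in>UNIV. chr b (vadd y (vadd x c))))) / (N * N)"
    by (subst sum.swap, rule arg_cong[where f="\<lambda>z. z / _"], rule sum.cong, simp,
        subst sum.swap, simp add: sum_distrib_left mult.assoc vadd_ac)
  also have "\<dots> = (\<Sum>x\<in>UNIV. T x * (N * cnj (T (vadd x c)))) / (N * N)"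
    by (simp add: sum_chr_delta N_def)
  also have "\<dots> = (\<Sum>x\<in>UNIV. T x * cnj (T (vadd x c))) / N"
    using N0 by (simp add: sum_distrib_left[symmetric] mult.left_commute)
  finally show ?thesis by (simp add: T_def N_def)
qed

lemma key_identity:
  fixes \<phi> :: "('n::finite) vec2 \<Rightarrow> complex"
  shows "(\<Sum>a\<in>UNIV. \<Sum>b\<in>UNIV. fourier (Delta a \<phi>) b * cnj (fourier (Delta a \<phi>) b) * (chr d a * chr c b))
    = of_nat (card (UNIV :: 'n vec2 set)) * (fourier (Delta c \<phi>) d * cnj (fourier (Delta c \<phi>) d))"
proof -
  define N :: complex where "N = of_nat (card (UNIV :: 'n vec2 set))"
  have N0: "N \<noteq> 0" by (simp add: N_def)
  have cN: "cnj N = N" by (simp add: N_def)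
  define R where "R a x = \<phi> (vadd x a) * cnj (\<phi> x) * (cnj (\<phi> (vadd (vadd x c) a)) * \<phi> (vadd x c))" for a x
  have "(\<Sum>a\<in>UNIV. \<Sum>b\<in>UNIV. fourier (Delta a \<phi>) b * cnj (fourier (Delta a \<phi>) b) * (chr d a * chr c b))
     = (\<Sum>a\<in>UNIV. chr d a * (\<Sum>b\<in>UNIV. fourier (Delta a \<phi>) b * cnj (fourier (Delta a \<phi>) b) * chr c b))"
    by (simp add: sum_distrib_left mult_ac)
  also have "\<dots> = (\<Sum>a\<in>UNIV. chr d a * (\<Sum>x\<in>UNIV. R a x) / N)"
    by (simp add: lemB R_def N_def)
  also have "\<dots> = (\<Sum>x\<in>UNIV. \<Sum>a\<in>UNIV. chr d a * R a x) / N"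
    by (simp add: sum_divide_distrib sum_distrib_left) (rule sum.swap)
  also have "\<dots> = (\<Sum>x\<in>UNIV. \<Sum>a\<in>UNIV. (\<phi> a * cnj (\<phi> (vadd a c)) * chr d a) * (cnj (\<phi> x) * \<phi> (vadd x c) * chr d x)) / N"
  proof -
    have "(\<Sum>a\<in>UNIV. chr d a * R a x) = (\<Sum>a\<in>UNIV. (\<phi> a * cnj (\<phi> (vadd a c)) * chr d a) * (cnj (\<phi> x) * \<phi> (vadd x c) * chr d x))" for x
    proof -
      have "(\<Sum>a\<in>UNIV. chr d a * R a x) = (\<Sum>a\<in>UNIV. chr d (vadd a x) * R (vadd a x) x)"
        by (rule sum_shift[symmetric])
      also have "\<dots> = (\<Sum>a\<in>UNIV. (\<phi> a * cnj (\<phi> (vadd a c)) * chr d a) * (cnj (\<phi> x) * \<phi> (vadd x c) * chr d x))"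
      proof (rule sum.cong)
        fix a
        have e1: "vadd x (vadd a x) = a" by (auto simp: vadd_def fun_eq_iff)
        have e2: "vadd (vadd x c) (vadd a x) = vadd a c" by (auto simp: vadd_def fun_eq_iff)
        show "chr d (vadd a x) * R (vadd a x) x = (\<phi> a * cnj (\<phi> (vadd a c)) * chr d a) * (cnj (\<phi> x) * \<phi> (vadd x c) * chr d x)"
          unfolding R_def e1 e2 chr_add by (simp add: mult_ac)
      qed simp
      finally show ?thesis .
    qed
    then show ?thesis by simp
  qed
  also have "\<dots> = (\<Sum>a\<in>UNIV. \<phi> a * cnj (\<phi> (vadd a c)) * chr d a) * (\<Sum>x\<in>UNIV. cnj (\<phi> x) * \<phi> (vadd x c) * chr d x) / N"
    unfolding sum_product by (subst sum.swap) (rule refl)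
  also have "\<dots> = (N * cnj (fourier (Delta c \<phi>) d)) * (N * fourier (Delta c \<phi>) d) / N"
    using N0 by (simp add: fourier_Delta N_def[symmetric] cN cnj_sum mult_ac)
  also have "\<dots> = N * (fourier (Delta c \<phi>) d * cnj (fourier (Delta c \<phi>) d))"
    using N0 by (simp add: field_simps)
  finally show ?thesis by (simp add: N_def)
qed

lemma lemB_gen:
  fixes h :: "('n::finite) vec2 \<Rightarrow> complex"
  shows "(\<Sum>b\<in>UNIV. fourier h b * cnj (fourier h b) * chr c b) =
    (\<Sum>x\<in>UNIV. h x * cnj (h (vadd x c))) / of_nat (card (UNIV :: 'n vec2 set))"
proof -
  define N :: complex where "N = of_nat (card (UNIV :: 'n vec2 set))"
  have N0: "N \<noteq> 0" by (simp add: N_def)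
  define T where "T = h"
  have F: "fourier h b = (\<Sum>x\<in>UNIV. T x * chr b x) / N" for b
    by (simp add: fourier_def expect_def T_def N_def)
  have cN: "cnj N = N" by (simp add: N_def)
  have FF: "fourier h b * cnj (fourier h b) =
     (\<Sum>x\<in>UNIV. \<Sum>y\<in>UNIV. T x * cnj (T y) * (chr b x * chr b y)) / (N * N)" for b
    unfolding F by (simp add: cN cnj_sum sum_product field_simps)
  have FF2: "fourier h b * cnj (fourier h b) * chr c b =
     (\<Sum>x\<in>UNIV. \<Sum>y\<in>UNIV. T x * cnj (T y) * chr b (vadd (vadd x y) c)) / (N * N)" for b
    unfolding FF by (simp add: sum_distrib_left sum_distrib_right chr_add chr_comm[of c] mult_ac)
  have "(\<Sum>b\<in>UNIV. fourier h b * cnj (fourier h b) * chr c b)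
     = (\<Sum>b\<in>UNIV. (\<Sum>x\<in>UNIV. \<Sum>y\<in>UNIV. T x * cnj (T y) * chr b (vadd (vadd x y) c))) / (N * N)"
    unfolding FF2 sum_divide_distrib ..
  also have "\<dots> = (\<Sum>x\<in>UNIV. T x * (\<Sum>y\<in>UNIV. cnj (T y) * (\<Sum>b\<in>UNIV. chr b (vadd y (vadd x c))))) / (N * N)"
    by (subst sum.swap, rule arg_cong[where f="\<lambda>z. z / _"], rule sum.cong, simp,
        subst sum.swap, simp add: sum_distrib_left mult.assoc vadd_ac)
  also have "\<dots> = (\<Sum>x\<in>UNIV. T x * (N * cnj (T (vadd x c)))) / (N * N)"
    by (simp add: sum_chr_delta N_def)
  also have "\<dots> = (\<Sum>x\<in>UNIV. T x * cnj (T (vadd x c))) / N"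
    using N0 by (simp add: sum_distrib_left[symmetric] mult.left_commute)
  finally show ?thesis by (simp add: T_def N_def)
qed

lemma U2_identity:
  fixes h :: "('n::finite) vec2 \<Rightarrow> complex"
  shows "(\<Sum>x\<in>UNIV. \<Sum>b\<in>UNIV. \<Sum>c\<in>UNIV. Delta b (Delta c h) x) =
    of_nat (card (UNIV :: 'n vec2 set)) ^ 3 * (\<Sum>b\<in>UNIV. (fourier h b * cnj (fourier h b))^2)"
proof -
  define N :: complex where "N = of_nat (card (UNIV :: 'n vec2 set))"
  have N0: "N \<noteq> 0" by (simp add: N_def)
  have cN: "cnj N = N" by (simp add: N_def)
  define P where "P b = fourier h b * cnj (fourier h b)" for b
  have PP: "P b = (\<Sum>x\<in>UNIV. \<Sum>y\<in>UNIV. h x * cnj (h y) * chr (vadd x y) b) / (N * N)" for b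
    unfolding P_def fourier_def expect_def N_def[symmetric]
    by (simp add: cN cnj_sum sum_product field_simps chr_comm[of _ b] chr_add)
  have S1: "(\<Sum>b\<in>UNIV. P b ^ 2) = (\<Sum>x\<in>UNIV. \<Sum>y\<in>UNIV. \<Sum>b\<in>UNIV. h x * cnj (h y) * (P b * chr (vadd x y) b)) / (N * N)"
  proof -
    have "(\<Sum>b\<in>UNIV. P b ^ 2) = (\<Sum>b\<in>UNIV. P b * ((\<Sum>x\<in>UNIV. \<Sum>y\<in>UNIV. h x * cnj (h y) * chr (vadd x y) b) / (N * N)))"
      by (simp add: power2_eq_square PP[symmetric])
    also have "\<dots> = (\<Sum>b\<in>UNIV. \<Sum>x\<in>UNIV. \<Sum>y\<in>UNIV. h x * cnj (h y) * (P b * chr (vadd x y) b)) / (N * N)"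
      by (simp add: sum_divide_distrib sum_distrib_left mult_ac)
    also have "\<dots> = (\<Sum>x\<in>UNIV. \<Sum>y\<in>UNIV. \<Sum>b\<in>UNIV. h x * cnj (h y) * (P b * chr (vadd x y) b)) / (N * N)"
      by (subst sum.swap, rule arg_cong[where f="\<lambda>z. z / _"], rule sum.cong, simp, subst sum.swap, simp)
    finally show ?thesis .
  qed
  also have "\<dots> = (\<Sum>x\<in>UNIV. \<Sum>y\<in>UNIV. h x * cnj (h y) * ((\<Sum>z\<in>UNIV. h z * cnj (h (vadd z (vadd x y)))) / N)) / (N * N)"
    by (simp add: sum_distrib_left[symmetric] P_def lemB_gen N_def)
  also have "\<dots> = (\<Sum>x\<in>UNIV. \<Sum>y\<in>UNIV. \<Sum>z\<in>UNIV. h x * cnj (h y) * (h (vadd z (vadd x y)) * cnj (h z))) / (N * N * N)"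
  proof -
    have "(\<Sum>z\<in>UNIV. h z * cnj (h (vadd z (vadd x y)))) = (\<Sum>z\<in>UNIV. h (vadd z (vadd x y)) * cnj (h z))" for x y
    proof -
      have "(\<Sum>z\<in>UNIV. h z * cnj (h (vadd z (vadd x y)))) = (\<Sum>z\<in>UNIV. h (vadd z (vadd x y)) * cnj (h (vadd (vadd z (vadd x y)) (vadd x y))))"
        by (rule sum_shift[symmetric])
      also have "\<dots> = (\<Sum>z\<in>UNIV. h (vadd z (vadd x y)) * cnj (h z))"
        by (simp add: vadd_assoc)
      finally show ?thesis .
    qed
    then show ?thesis using N0
      by (simp add: sum_divide_distrib sum_distrib_left mult_ac)
  qed
  finally have R: "(\<Sum>b\<in>UNIV. P b ^ 2) = (\<Sum>x\<in>UNIV. \<Sum>y\<in>UNIV. \<Sum>z\<in>UNIV. h x * cnj (h y) * (h (vadd z (vadd x y)) * cnj (h z))) / (N * N * N)" .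
  have L: "(\<Sum>x\<in>UNIV. \<Sum>b\<in>UNIV. \<Sum>c\<in>UNIV. Delta b (Delta c h) x) =
     (\<Sum>x\<in>UNIV. \<Sum>y\<in>UNIV. \<Sum>z\<in>UNIV. h x * cnj (h y) * (h (vadd z (vadd x y)) * cnj (h z)))"
  proof (rule sum.cong[OF refl])
    fix x
    have "(\<Sum>b\<in>UNIV. \<Sum>c\<in>UNIV. Delta b (Delta c h) x) = (\<Sum>b\<in>UNIV. \<Sum>c\<in>UNIV. Delta (vadd b x) (Delta (vadd c x) h) x)"
      by (subst sum_shift[symmetric, of _ x], rule sum.cong[OF refl], rule sum_shift[symmetric])
    also have "\<dots> = (\<Sum>b\<in>UNIV. \<Sum>c\<in>UNIV. h x * cnj (h c) * (h (vadd b (vadd x c)) * cnj (h b)))"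
    proof (intro sum.cong[OF refl])
      fix b c
      have e1: "vadd (vadd x (vadd b x)) (vadd c x) = vadd b (vadd x c)" by (auto simp: vadd_def fun_eq_iff)
      have e2: "vadd x (vadd b x) = b" "vadd x (vadd c x) = c" by (auto simp: vadd_def fun_eq_iff)
      show "Delta (vadd b x) (Delta (vadd c x) h) x = h x * cnj (h c) * (h (vadd b (vadd x c)) * cnj (h b))"
        unfolding Delta_def e1 e2 by (simp add: mult_ac vadd_comm[of c x])
    qed
    also have "\<dots> = (\<Sum>y\<in>UNIV. \<Sum>z\<in>UNIV. h x * cnj (h y) * (h (vadd z (vadd x y)) * cnj (h z)))"
      by (subst sum.swap) (rule refl)
    finally show "(\<Sum>b\<in>UNIV. \<Sum>c\<in>UNIV. Delta b (Delta c h) x) = (\<Sum>y\<in>UNIV. \<Sum>z\<in>UNIV. h x * cnj (h y) * (h (vadd z (vadd x y)) * cnj (h z)))" .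
  qed
  show ?thesis unfolding L N_def[symmetric] P_def[symmetric] R using N0
    by (simp add: power3_eq_cube)
qed

lemma Delta_comm: "Delta a (Delta b h) = Delta b (Delta a h)"
proof -
  have e: "vadd (vadd x a) b = vadd (vadd x b) a" for x :: "'a vec2" by (auto simp: vadd_def fun_eq_iff)
  show ?thesis by (rule ext) (simp add: Delta_def e mult_ac)
qed

lemma Delta_comm3: "Delta a (Delta b (Delta c g)) = Delta b (Delta c (Delta a g))"
  by (metis Delta_comm)

lemma U3_formula:
  fixes g :: "('n::finite) vec2 \<Rightarrow> complex"
  shows "expect (\<lambda>x. expect (\<lambda>a. expect (\<lambda>b. expect (\<lambda>c. Delta a (Delta b (Delta c g)) x)))) =
    (\<Sum>a\<in>UNIV. \<Sum>b\<in>UNIV. (fourier (Delta a g) b * cnj (fourier (Delta a g) b))^2)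
      / of_nat (card (UNIV :: 'n vec2 set))"
proof -
  define N :: complex where "N = of_nat (card (UNIV :: 'n vec2 set))"
  have N0: "N \<noteq> 0" by (simp add: N_def)
  have "expect (\<lambda>x. expect (\<lambda>a. expect (\<lambda>b. expect (\<lambda>c. Delta a (Delta b (Delta c g)) x)))) =
     (\<Sum>x\<in>UNIV. \<Sum>a\<in>UNIV. \<Sum>b\<in>UNIV. \<Sum>c\<in>UNIV. Delta a (Delta b (Delta c g)) x) / (N*N*N*N)"
    by (simp add: expect_def N_def[symmetric] sum_divide_distrib)
  also have "\<dots> = (\<Sum>a\<in>UNIV. \<Sum>x\<in>UNIV. \<Sum>b\<in>UNIV. \<Sum>c\<in>UNIV. Delta b (Delta c (Delta a g)) x) / (N*N*N*N)"
    by (subst sum.swap, rule arg_cong[where f="\<lambda>z. z / _"], intro sum.cong refl, rule fun_cong[OF Delta_comm3])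
  also have "\<dots> = (\<Sum>a\<in>UNIV. N^3 * (\<Sum>b\<in>UNIV. (fourier (Delta a g) b * cnj (fourier (Delta a g) b))^2)) / (N*N*N*N)"
    by (simp add: U2_identity N_def)
  also have "\<dots> = (\<Sum>a\<in>UNIV. \<Sum>b\<in>UNIV. (fourier (Delta a g) b * cnj (fourier (Delta a g) b))^2) / N"
    using N0 by (simp add: sum_distrib_left[symmetric] power3_eq_cube)
  finally show ?thesis by (simp add: N_def)
qed

definition sg :: "('n::finite) vec2 \<times> 'n vec2 \<Rightarrow> 'n vec2 \<times> 'n vec2 \<Rightarrow> real" where
  "sg u v = (if sympl u v then -1 else 1)"

lemma chr_sg: "chr d a * chr c b = complex_of_real (sg (a,b) (c,d))"
  by (simp add: chr_def sg_def sympl_def dot2_comm)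

lemma sympl_add: "sympl w (vadd (fst u) (fst v), vadd (snd u) (snd v)) = (sympl w u \<noteq> sympl w v)"
  by (auto simp: sympl_def dot2_add)

lemma sympl_zero: "sympl u (vzero, vzero) = False"
  by (simp add: sympl_def)

lemma cns: "(complex_of_real (cmod z))^2 = z * cnj z"
  using complex_norm_square[of z] by simp
lemma cns4: "(complex_of_real (cmod z))^4 = (z * cnj z)^2"
  using cns[of z] by (metis power_mult numeral_Bit0 mult_2_right)

lemma key_real:
  fixes \<phi> :: "('n::finite) vec2 \<Rightarrow> complex"
  shows "(\<Sum>a\<in>UNIV. \<Sum>b\<in>UNIV. (cmod (fourier (Delta a \<phi>) b))^2 * sg (a,b) (c,d))
    = real (card (UNIV :: 'n vec2 set)) * (cmod (fourier (Delta c \<phi>) d))^2"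
proof -
  have "complex_of_real (\<Sum>a\<in>UNIV. \<Sum>b\<in>UNIV. (cmod (fourier (Delta a \<phi>) b))^2 * sg (a,b) (c,d))
    = complex_of_real (real (card (UNIV :: 'n vec2 set)) * (cmod (fourier (Delta c \<phi>) d))^2)"
    using key_identity[of \<phi> d c] by (simp add: cns chr_sg)
  then show ?thesis using of_real_eq_iff by blast
qed

lemma U3_real:
  fixes \<phi> :: "('n::finite) vec2 \<Rightarrow> complex"
  shows "U3norm \<phi> = ((\<Sum>a\<in>UNIV. \<Sum>b\<in>UNIV. ((cmod (fourier (Delta a \<phi>) b))^2)^2)
      / real (card (UNIV :: 'n vec2 set))) powr (1/8)"
proof -
  have "expect (\<lambda>x. expect (\<lambda>a. expect (\<lambda>b. expect (\<lambda>c. Delta a (Delta b (Delta c \<phi>)) x)))) =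
    complex_of_real ((\<Sum>a\<in>UNIV. \<Sum>b\<in>UNIV. ((cmod (fourier (Delta a \<phi>) b))^2)^2)
      / real (card (UNIV :: 'n vec2 set)))"
    unfolding U3_formula by (simp add: cns4)
  then show ?thesis unfolding U3norm_def by simp
qed

lemma F00:
  fixes \<phi> :: "('n::finite) vec2 \<Rightarrow> complex"
  shows "fourier (Delta vzero \<phi>) vzero = complex_of_real (expect (\<lambda>x. (cmod (\<phi> x))\<^sup>2))"
  by (simp add: fourier_Delta expect_def cns)

lemma norm2_eq: "norm2 \<phi> = sqrt (expect (\<lambda>x. (cmod (\<phi> x))\<^sup>2))"
  by (simp add: norm2_def)

lemma half_le: "(2::real) * t \<le> s \<Longrightarrow> t \<le> s / 2" by simp

lemma fourier_bound:
  fixes \<phi> :: "('n::finite) vec2 \<Rightarrow> complex"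
  shows "cmod (fourier (Delta a \<phi>) b) \<le> expect (\<lambda>x. (cmod (\<phi> x))\<^sup>2)"
proof -
  define N :: real where "N = real (card (UNIV :: 'n vec2 set))"
  have N0: "N > 0" by (simp add: N_def card_gt_0_iff)
  have "cmod (fourier (Delta a \<phi>) b) = cmod (\<Sum>x\<in>UNIV. \<phi> (vadd x a) * cnj (\<phi> x) * chr b x) / N"
    by (simp add: fourier_Delta N_def norm_divide)
  also have "\<dots> \<le> (\<Sum>x\<in>UNIV. cmod (\<phi> (vadd x a) * cnj (\<phi> x) * chr b x)) / N"
    using N0 by (intro divide_right_mono norm_sum) auto
  also have "\<dots> \<le> (\<Sum>x\<in>UNIV. ((cmod (\<phi> (vadd x a)))\<^sup>2 + (cmod (\<phi> x))\<^sup>2) / 2) / N"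
  proof (intro divide_right_mono sum_mono)
    fix x
    have c: "cmod (chr b x) = 1" by (simp add: chr_def)
    have "cmod (\<phi> (vadd x a) * cnj (\<phi> x) * chr b x) = cmod (\<phi> (vadd x a)) * cmod (\<phi> x)"
      by (simp add: norm_mult c)
    also have "\<dots> \<le> ((cmod (\<phi> (vadd x a)))\<^sup>2 + (cmod (\<phi> x))\<^sup>2) / 2"
      using sum_squares_bound[of "cmod (\<phi> (vadd x a))" "cmod (\<phi> x)"] by (intro half_le) (simp only: mult.assoc)
    finally show "cmod (\<phi> (vadd x a) * cnj (\<phi> x) * chr b x) \<le> ((cmod (\<phi> (vadd x a)))\<^sup>2 + (cmod (\<phi> x))\<^sup>2) / 2" .
  qed (use N0 in auto)
  also have "\<dots> = expect (\<lambda>x. (cmod (\<phi> x))\<^sup>2)"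
    by (simp add: expect_def N_def sum.distrib sum_divide_distrib[symmetric]
        sum_shift[of "\<lambda>x. (cmod (\<phi> x))\<^sup>2"])
  finally show ?thesis .
qed

lemma sum_pair_UNIV:
  fixes f :: "('a::finite) \<times> ('b::finite) \<Rightarrow> real"
  shows "(\<Sum>u\<in>UNIV. f u) = (\<Sum>a\<in>UNIV. \<Sum>b\<in>UNIV. f (a,b))"
  by (simp add: sum.cartesian_product)

lemma powr8_eq1: "(x::real) \<ge> 0 \<Longrightarrow> x powr (1/8) = 1 \<longleftrightarrow> x = 1"
proof
  assume "x \<ge> 0" "x powr (1/8) = 1"
  then have "x \<noteq> 0" by auto
  then have "x = (x powr (1/8)) powr 8" using \<open>x \<ge> 0\<close> by (simp add: powr_powr)
  then show "x = 1" using \<open>x powr (1/8) = 1\<close> by simp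
qed simp

theorem proposition2p4:
  fixes \<phi> :: "('n::finite) vec2 \<Rightarrow> complex"
  shows "(norm2 \<phi> = 1 \<and> U3norm \<phi> = 1) \<longleftrightarrow>
    (\<exists>L. lagrangian L \<and>
       (\<forall>a b. cmod (fourier (Delta a \<phi>) b) = (if (a, b) \<in> L then 1 else 0)))"
proof -
  define N :: real where "N = real (card (UNIV :: 'n vec2 set))"
  have N0: "N > 0" by (simp add: N_def card_gt_0_iff)
  define P where "P u = (cmod (fourier (Delta (fst u) \<phi>) (snd u)))^2" for u
  define E where "E = expect (\<lambda>x. (cmod (\<phi> x))\<^sup>2)"
  have E0: "E \<ge> 0" by (simp add: E_def expect_def sum_nonneg)
  have Pnn: "P u \<ge> 0" for u by (simp add: P_def)
  have K: "(\<Sum>u\<in>UNIV. P u * sg u v) = N * P v" for v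
    using key_real[of \<phi> "fst v" "snd v"]
    by (simp add: P_def N_def sum_pair_UNIV)
  have P00: "P (vzero, vzero) = E^2"
    by (simp add: P_def F00 E_def)
  have sumP: "(\<Sum>u\<in>UNIV. P u) = N * E^2"
    using K[of "(vzero, vzero)"] by (simp add: sg_def sympl_zero P00)
  have U3eq: "U3norm \<phi> = ((\<Sum>u\<in>UNIV. (P u)^2) / N) powr (1/8)"
    unfolding U3_real sum_pair_UNIV[where f="\<lambda>u. (P u)^2"] by (simp add: P_def N_def)
  have Pbd: "P u \<le> E^2" for u
    unfolding P_def E_def by (intro power_mono fourier_bound) auto
  show ?thesis
  proof
    assume H: "norm2 \<phi> = 1 \<and> U3norm \<phi> = 1"
    have E1: "E = 1" using H E0 by (simp add: norm2_eq E_def[symmetric])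
    have "(\<Sum>u\<in>UNIV. (P u)^2) / N = 1"
      using H U3eq powr8_eq1[of "(\<Sum>u\<in>UNIV. (P u)^2) / N"] N0 by (simp add: sum_nonneg)
    then have sumP2: "(\<Sum>u\<in>UNIV. (P u)^2) = N" using N0 by simp
    have "(\<Sum>u\<in>UNIV. P u - (P u)^2) = 0"
      using sumP2 sumP E1 by (simp add: sum_subtractf)
    moreover have "P u - (P u)^2 \<ge> 0" for u
      using Pbd[of u] Pnn[of u] E1 by (simp add: power2_eq_square mult_left_le)
    ultimately have "\<forall>u\<in>UNIV. P u - (P u)^2 = 0"
      by (subst sum_nonneg_eq_0_iff[symmetric]) auto
    then have Z: "P u - (P u)^2 = 0" for u by blast
    have "P u * (1 - P u) = 0" for u
      using Z[of u] by (simp add: power2_eq_square algebra_simps)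
    then have P01: "P u = 0 \<or> P u = 1" for u
      by (metis eq_iff_diff_eq_0 mult_eq_0_iff)
    define L where "L = {u. P u = 1}"
    have Pind: "P u = (if u \<in> L then 1 else 0)" for u using P01[of u] by (auto simp: L_def)
    have cardL: "real (card L) = N"
    proof -
      have "(\<Sum>u\<in>UNIV. P u) = (\<Sum>u\<in>L. 1)"
        using sum.inter_restrict[of UNIV "\<lambda>u. 1::real" L] by (simp add: Pind)
      then show ?thesis using sumP E1 by simp
    qed
    have KL: "(\<Sum>u\<in>L. sg u v) = N * P v" for v
    proof -
      have "(\<Sum>u\<in>UNIV. P u * sg u v) = (\<Sum>u\<in>UNIV. if u \<in> L then sg u v else 0)"
        by (rule sum.cong) (auto simp: Pind)
      also have "\<dots> = (\<Sum>u\<in>L. sg u v)"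
        using sum.inter_restrict[of UNIV "\<lambda>u. sg u v" L] by simp
      finally show ?thesis using K[of v] by simp
    qed
    have perp: "v \<in> L \<longleftrightarrow> (\<forall>u\<in>L. \<not> sympl u v)" for v
    proof
      assume vL: "v \<in> L"
      then have "(\<Sum>u\<in>L. sg u v) = (\<Sum>u\<in>L. 1)" using KL[of v] cardL by (simp add: L_def)
      then have "(\<Sum>u\<in>L. 1 - sg u v) = 0" by (simp add: sum_subtractf)
      moreover have "1 - sg u v \<ge> 0" for u by (simp add: sg_def)
      ultimately have "\<forall>u\<in>L. 1 - sg u v = 0"
        by (subst sum_nonneg_eq_0_iff[symmetric]) auto
      then show "\<forall>u\<in>L. \<not> sympl u v" by (auto simp: sg_def)
    next
      assume "\<forall>u\<in>L. \<not> sympl u v"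
      then have "(\<Sum>u\<in>L. sg u v) = (\<Sum>u\<in>L. 1)" by (simp add: sg_def)
      then have "N * P v = N" using KL[of v] cardL by simp
      then show "v \<in> L" using N0 by (simp add: L_def)
    qed
    have sub: "subspace2 L"
      unfolding subspace2_def
    proof (intro conjI ballI)
      show "(vzero, vzero) \<in> L" using P00 E1 by (simp add: L_def)
    next
      fix u v assume "u \<in> L" "v \<in> L"
      then have "\<forall>w\<in>L. \<not> sympl w u" "\<forall>w\<in>L. \<not> sympl w v" using perp[of u] perp[of v] by auto
      then have "\<forall>w\<in>L. \<not> sympl w (vadd (fst u) (fst v), vadd (snd u) (snd v))"
        by (simp add: sympl_add)
      then show "(vadd (fst u) (fst v), vadd (snd u) (snd v)) \<in> L"
        using perp[of "(vadd (fst u) (fst v), vadd (snd u) (snd v))"] by blast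
    qed
    have iso: "isotropic L" unfolding isotropic_def
      proof (intro conjI sub ballI)
        fix u v assume "u \<in> L" "v \<in> L"
        then show "\<not> sympl u v" using perp[of v] by blast
      qed
    have lag: "lagrangian L"
      unfolding lagrangian_def
    proof (intro conjI allI impI iso)
      fix M assume M: "isotropic M \<and> L \<subseteq> M"
      have "M \<subseteq> L"
      proof
        fix v assume "v \<in> M"
        then show "v \<in> L" using M perp[of v] by (auto simp: isotropic_def)
      qed
      then show "M = L" using M by blast
    qed
    have "cmod (fourier (Delta a \<phi>) b) = (if (a, b) \<in> L then 1 else 0)" for a b
    proof -
      have "(cmod (fourier (Delta a \<phi>) b))^2 = (if (a, b) \<in> L then 1 else 0)"
        using Pind[of "(a,b)"] by (simp add: P_def)
      then show ?thesis by (metis norm_ge_zero real_sqrt_abs abs_of_nonneg real_sqrt_one real_sqrt_zero)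
    qed
    then show "\<exists>L. lagrangian L \<and> (\<forall>a b. cmod (fourier (Delta a \<phi>) b) = (if (a, b) \<in> L then 1 else 0))"
      using lag by blast
  next
    assume "\<exists>L. lagrangian L \<and> (\<forall>a b. cmod (fourier (Delta a \<phi>) b) = (if (a, b) \<in> L then 1 else 0))"
    then obtain L where lag: "lagrangian L"
      and FL: "\<And>a b. cmod (fourier (Delta a \<phi>) b) = (if (a, b) \<in> L then 1 else 0)" by blast
    have Pind: "P u = (if u \<in> L then 1 else 0)" for u
      using FL[of "fst u" "snd u"] by (simp add: P_def)
    have "(vzero, vzero) \<in> L" using lag by (simp add: lagrangian_def isotropic_def subspace2_def)
    then have "E^2 = 1" using P00 Pind by simp
    then have E1: "E = 1" using E0 by (simp add: power2_eq_1_iff)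
    have "norm2 \<phi> = 1" by (simp add: norm2_eq E_def[symmetric] E1)
    moreover have "(\<Sum>u\<in>UNIV. (P u)^2) = (\<Sum>u\<in>UNIV. P u)"
      by (intro sum.cong) (auto simp: Pind)
    then have "U3norm \<phi> = 1" using U3eq sumP E1 N0 by simp
    ultimately show "norm2 \<phi> = 1 \<and> U3norm \<phi> = 1" by blast
  qed
qed

end
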